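(* Let $h>0$ and $1>\theta_1>\theta_2>0$, and let $\Theta\in\mathbb{R}^{2\times2}$ be given by \[ \Theta=\frac{1}{4h}\begin{pmatrix}\cot(\pi\theta_1)&\cot\left(\pi\frac{\theta_1+\theta_2}{2}\right)-\cot\left(\pi\frac{\theta_1-\theta_2}{2}\right)\\ \cot\left(\pi\frac{\theta_1+\theta_2}{2}\right)-\cot\left(\pi\frac{\theta_2-\theta_1}{2}\right)&\cot(\pi\theta_2)\end{pmatrix}. \] (i) If $\theta_1\le1/2$, then $\Theta$ is invertible for all $\theta_2\in(0,\theta_1)$. (ii) If $\theta_1>1/2$, then $\Theta$ is invertible for all $\theta_2\in(0,\theta_1)$ except for exactly one value $\hat\theta_2(\theta_1)$, which lies in $(0,1/2)$. The graph of $\hat\theta_2:(1/2,1)\to(0,1/2)$ is the image of the curve \[ (\pi/4,3\pi/4)\to(1/2,1)\times(0,1/2),\qquad t\mapsto\bigl((t+f(t))/\pi,\,(t-f(t))/\pi\bigr), \] where $f(x)=\operatorname{arccot}\left(\sqrt{\tfrac12\left(\cot(x)^2+\sqrt{4-3\cot(x)^4}\right)}\right)$ for $x\in(\pi/4,3\pi/4)$. *)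

theory Defs
  imports "HOL-Analysis.Analysis"
begin

definition arccot :: "real \<Rightarrow> real" where
  "arccot x = pi / 2 - arctan x"

text \<open>The 2x2 matrix Theta (rows listed first).\<close>
definition Theta :: "real \<Rightarrow> real \<Rightarrow> real \<Rightarrow> real^2^2" where
  "Theta h t1 t2 = (1 / (4 * h)) *\<^sub>R vector [
     vector [cot (pi * t1),
             cot (pi * ((t1 + t2) / 2)) - cot (pi * ((t1 - t2) / 2))],
     vector [cot (pi * ((t1 + t2) / 2)) - cot (pi * ((t2 - t1) / 2)),
             cot (pi * t2)]]"

definition fcurve :: "real \<Rightarrow> real" where
  "fcurve x = arccot (sqrt ((1/2) * ((cot x)^2 + sqrt (4 - 3 * (cot x)^4))))"

end

theory Submission
  imports Defs
begin

definition G :: "real \<Rightarrow> real \<Rightarrow> real" where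
  "G a b = cos a * cos b * (cos a - cos b)^2 + 4 * (sin a)^2 * (sin b)^2"

lemma det_Theta: "det (Theta h t1 t2) = (1/(4*h))^2 * (cot(pi*t1)*cot(pi*t2)
   - (cot(pi*((t1+t2)/2)) - cot(pi*((t1-t2)/2))) * (cot(pi*((t1+t2)/2)) + cot(pi*((t1-t2)/2))))"
proof -
  have e: "pi*((t2-t1)/2) = - (pi*((t1-t2)/2))" by (simp add: right_diff_distrib diff_divide_distrib)
  show ?thesis unfolding det_2 Theta_def e by (simp add: power2_eq_square algebra_simps)
qed

lemma alg0: fixes a c r d P Q :: real assumes "a \<noteq> 0" "r \<noteq> 0" "P \<noteq> 0" "Q \<noteq> 0"
  and hP: "P = a*d + c*r" and hQ: "Q = a*d - c*r"
  shows "(c*d - a*r)/P * ((c*d + a*r)/Q) - (c/a - d/r)*(c/a + d/r)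
   = ((c*d - a*r) * (c*d + a*r) * ((c*d - a*r) - (c*d + a*r))^2 + 4 * P^2 * Q^2)
     / (4 * P * Q * a^2 * r^2)"
  using assms(1-4) apply (simp add: field_simps)
  unfolding hP hQ by algebra

lemma key:
  assumes "sin u \<noteq> 0" "sin v \<noteq> 0" "sin (u+v) \<noteq> 0" "sin (u-v) \<noteq> 0"
  shows "cot(u+v)*cot(u-v) - (cot u - cot v)*(cot u + cot v)
     = G (u+v) (u-v) / (4 * sin(u+v) * sin(u-v) * (sin u)^2 * (sin v)^2)"
  using alg0[of "sin u" "sin v" "sin u * cos v + cos u * sin v" "sin u * cos v - cos u * sin v" "cos v" "cos u"] assms unfolding G_def cot_def sin_add cos_add sin_diff cos_diff
  by simp

lemma alg: fixes a c r d :: real assumes "a \<noteq> 0" "r \<noteq> 0"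
  shows "(c*d - a*r) * (c*d + a*r) * ((c*d - a*r) - (c*d + a*r))^2 + 4 * (a*d + c*r)^2 * (a*d - c*r)^2
   = 4 * a ^ 4 * r ^ 4 * ((c/a)^4 - (c/a)^2*(d/r)^2 + (d/r)^4 - 1)"
  using assms by (simp add: field_simps) algebra

lemma G_XY:
  assumes "sin u \<noteq> 0" "sin v \<noteq> 0"
  shows "G (u+v) (u-v) = 4*(sin u)^4*(sin v)^4 * ((cot u)^4 - (cot u)^2*(cot v)^2 + (cot v)^4 - 1)"
  using alg[OF assms] unfolding G_def cot_def sin_add cos_add sin_diff cos_diff by simp


definition g :: "real \<Rightarrow> real \<Rightarrow> real" where
  "g x y = x*y*(x-y)^2 + 4*(1-x^2)*(1-y^2)"

lemma G_cos: "G a b = g (cos a) (cos b)"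
  unfolding G_def g_def by (simp add: sin_squared_eq)

lemma g_pos: assumes "0 \<le> x*y" "x^2 < 1" "y^2 < 1" shows "0 < g x y"
proof -
  have "0 \<le> x*y*(x-y)^2" using assms(1) by simp
  moreover have "0 < 4*(1-x^2)*(1-y^2)" using assms(2,3) by simp
  ultimately show ?thesis unfolding g_def by linarith
qed

lemma g_mono: assumes "x < 0" "x^2 < 1" "0 \<le> y1" "y1 < y2"
  shows "g x y2 < g x y1"
proof -
  have a: "(y1-x)^2 \<le> (y2-x)^2" using assms by (intro power_mono) auto
  have b: "y1*(y1-x)^2 \<le> y2*(y2-x)^2" using a assms by (intro mult_mono) auto
  have c: "x*(y2*(y2-x)^2) \<le> x*(y1*(y1-x)^2)" using b assms(1) by (intro mult_left_mono_neg) auto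
  have d: "y1^2 < y2^2" using assms by (intro power_strict_mono) auto
  have e: "4*(1-x^2)*(1-y2^2) < 4*(1-x^2)*(1-y1^2)" using d assms(2) by simp
  have c2: "x*y2*(y2-x)^2 \<le> x*y1*(y1-x)^2" using c by (simp add: mult.assoc)
  show ?thesis unfolding g_def power2_commute[of x y1] power2_commute[of x y2] using c2 e by linarith
qed

lemma cos_pos_lt: assumes "0 < b" "b < pi" "0 < cos b" shows "b < pi/2"
proof (rule ccontr)
  assume "\<not> b < pi/2"
  then have "0 \<le> cos (pi - b)" using assms by (intro cos_ge_zero) auto
  moreover have "cos b = - cos (pi - b)" by simp
  ultimately show False using assms by linarith
qed

lemma cos_neg_gt: assumes "0 < b" "b < pi" "cos b < 0" shows "pi/2 < b"
proof (rule ccontr)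
  assume "\<not> pi/2 < b"
  then have "0 \<le> cos b" using assms by (intro cos_ge_zero) auto
  then show False using assms by linarith
qed

lemma cos_sq_lt: assumes "0 < a" "a < pi" shows "(cos a)^2 < 1"
proof -
  have "0 < sin a" using assms by (rule sin_gt_zero)
  then have "0 < (sin a)^2" by simp
  then show ?thesis using sin_cos_squared_add[of a] by linarith
qed

lemma cot_sq_lt1: assumes "pi/4 < u" "u < 3*pi/4" shows "(cot u)^2 < 1"
proof -
  have su: "0 < sin u" using assms pi_gt_zero by (intro sin_gt_zero) auto
  have "0 < cos (2*u - pi)" using assms by (intro cos_gt_zero_pi) auto
  then have "cos (2*u) < 0" by simp
  then have "(cos u)^2 < (sin u)^2" by (simp add: cos_double)
  then show ?thesis using su by (simp add: cot_def power_divide)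
qed

lemma sing_iff:
  assumes "h > 0" "0 < t2" "t2 < t1" "t1 < 1"
  shows "invertible (Theta h t1 t2) \<longleftrightarrow> G (pi*t1) (pi*t2) \<noteq> 0"
proof -
  define u where "u = pi*((t1+t2)/2)"
  define v where "v = pi*((t1-t2)/2)"
  have uv: "u+v = pi*t1" "u-v = pi*t2" unfolding u_def v_def by (simp_all add: field_simps)
  have "(t1+t2)/2 < 1" "(t1-t2)/2 < 1" using assms by auto
  then have q: "pi*((t1+t2)/2) < pi*1" "pi*((t1-t2)/2) < pi*1" "pi*t1 < pi*1" "pi*t2 < pi*1"
    using assms by (auto intro!: mult_strict_left_mono)
  have p: "0 < pi*((t1+t2)/2)" "0 < pi*((t1-t2)/2)" "0 < pi*t1" "0 < pi*t2" using assms by auto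
  have "0 < sin u" unfolding u_def using p(1) q(1) by (intro sin_gt_zero) simp_all
  moreover have "0 < sin v" unfolding v_def using p(2) q(2) by (intro sin_gt_zero) simp_all
  moreover have "0 < sin (u+v)" unfolding uv using p(3) q(3) by (intro sin_gt_zero) simp_all
  moreover have "0 < sin (u-v)" unfolding uv using p(4) q(4) by (intro sin_gt_zero) simp_all
  ultimately have "0 < sin u" "0 < sin v" "0 < sin (u+v)" "0 < sin (u-v)" by auto
  then have s: "sin u \<noteq> 0" "sin v \<noteq> 0" "sin (u+v) \<noteq> 0" "sin (u-v) \<noteq> 0" by auto
  have det: "det (Theta h t1 t2) = (1/(4*h))^2 * (cot(u+v)*cot(u-v) - (cot u - cot v)*(cot u + cot v))"
    unfolding det_Theta uv u_def[symmetric] v_def[symmetric] ..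
  have d: "4 * sin(u+v) * sin(u-v) * (sin u)^2 * (sin v)^2 \<noteq> 0" using s by simp
  show ?thesis unfolding invertible_det_nz det key[OF s] using assms(1) d
    by (simp add: uv)
qed


lemma part1: assumes "h > 0" "t1 \<le> 1/2" "0 < t2" "t2 < t1"
  shows "invertible (Theta h t1 t2)"
proof -
  have t1: "t1 < 1" using assms by linarith
  have a: "0 < pi*t1" "pi*t1 \<le> pi/2" "0 < pi*t2" "pi*t2 \<le> pi/2" using assms by auto
  have "0 \<le> cos (pi*t1)" by (rule cos_ge_zero) (use a pi_gt_zero in linarith)+
  moreover have "0 \<le> cos (pi*t2)" by (rule cos_ge_zero) (use a pi_gt_zero in linarith)+
  moreover have "(cos (pi*t1))^2 < 1" by (rule cos_sq_lt) (use a pi_gt_zero in linarith)+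
  moreover have "(cos (pi*t2))^2 < 1" by (rule cos_sq_lt) (use a pi_gt_zero in linarith)+
  ultimately have "0 < g (cos (pi*t1)) (cos (pi*t2))" by (intro g_pos) auto
  then show ?thesis using sing_iff[OF assms(1,3,4) t1] by (simp add: G_cos)
qed

lemma root_props: assumes "h > 0" "1/2 < t1" "t1 < 1" "0 < t2" "t2 < t1"
  "\<not> invertible (Theta h t1 t2)"
  shows "0 < cos (pi*t2)" "t2 < 1/2"
proof -
  have "pi*t1 < pi*1" "pi*(1/2) < pi*t1" using assms by (intro mult_strict_left_mono; simp)+
  then have "-(pi/2) < pi - pi*t1" "pi - pi*t1 < pi/2" by linarith+
  then have "0 < cos (pi - pi*t1)" by (rule cos_gt_zero_pi)
  then have x: "cos (pi*t1) < 0" by simp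
  have a: "0 < pi*t1" "pi*t1 < pi" "0 < pi*t2" "pi*t2 < pi" using assms by auto
  have sq: "(cos (pi*t1))^2 < 1" "(cos (pi*t2))^2 < 1" using a by (auto intro!: cos_sq_lt)
  have z: "g (cos (pi*t1)) (cos (pi*t2)) = 0" using sing_iff[OF assms(1,4,5,3)] assms(6) by (simp add: G_cos)
  show c: "0 < cos (pi*t2)"
  proof (rule ccontr)
    assume "\<not> 0 < cos (pi*t2)"
    then have "0 \<le> cos (pi*t1) * cos (pi*t2)" using x by (simp add: mult_nonpos_nonpos)
    then have "0 < g (cos (pi*t1)) (cos (pi*t2))" using sq by (intro g_pos) auto
    then show False using z by simp
  qed
  have "pi*t2 < pi/2" using a c by (intro cos_pos_lt) auto
  then show "t2 < 1/2" by simp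
qed

lemma part2: assumes "h > 0" "1/2 < t1" "t1 < 1"
  shows "\<exists>!t2. 0 < t2 \<and> t2 < t1 \<and> \<not> invertible (Theta h t1 t2)"
proof -
  define x where "x = cos (pi*t1)"
  have "pi*t1 < pi*1" "pi*(1/2) < pi*t1" using assms by (intro mult_strict_left_mono; simp)+
  then have "-(pi/2) < pi - pi*t1" "pi - pi*t1 < pi/2" by linarith+
  then have "0 < cos (pi - pi*t1)" by (rule cos_gt_zero_pi)
  then have x: "x < 0" by (simp add: x_def)
  have a: "0 < pi*t1" "pi*t1 < pi" using assms by auto
  have sq: "x^2 < 1" unfolding x_def using a by (auto intro!: cos_sq_lt)
  have g0: "0 \<le> g x 0" using sq by (simp add: g_def)
  have g1e: "g x 1 = x*(x-1)^2" by (simp add: g_def)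
  have xm: "0 < (x-1)^2" using x by simp
  have g1n: "x*(x-1)^2 < 0" using x xm by (rule mult_neg_pos)
  have g1: "g x 1 \<le> 0" using g1e g1n by simp
  have "\<exists>y. 0 \<le> y \<and> y \<le> 1 \<and> g x y = 0"
  proof (rule IVT2[of "g x" 1 0 0, OF g1 g0])
    have "g x = (\<lambda>y. x*y*(x-y)^2 + 4*(1-x^2)*(1-y^2))" by (rule ext) (simp add: g_def)
    then show "\<forall>y. 0 \<le> y \<and> y \<le> 1 \<longrightarrow> isCont (g x) y" by (auto intro!: continuous_intros)
  qed simp
  then obtain y where y: "0 \<le> y" "y \<le> 1" "g x y = 0" by blast
  have g0e: "g x 0 = 4*(1-x^2)" by (simp add: g_def)
  have "y \<noteq> 0" using y(3) sq g0e by (metis less_numeral_extra(3) diff_gt_0_iff_gt mult_eq_0_iff zero_neq_numeral)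
  moreover have "y \<noteq> 1" using y(3) g1e g1n by (metis less_irrefl)
  ultimately have y2: "0 < y" "y < 1" using y by auto
  define b where "b = arccos y"
  have b: "0 < b" "b < pi" "cos b = y" using arccos_lt_bounded[of y] y2 by (auto simp: b_def)
  have "b < pi/2" using b y2 by (intro cos_pos_lt) auto
  moreover have "pi/2 < pi*t1" using assms by auto
  ultimately have "b < pi*t1" by linarith
  then have "b/pi < (pi*t1)/pi" using pi_gt_zero by (rule divide_strict_right_mono)
  then have bt: "b/pi < t1" by simp
  have bpos: "0 < b/pi" using b by simp
  have "\<not> invertible (Theta h t1 (b/pi))"
    using sing_iff[OF assms(1) bpos bt assms(3)] b y by (simp add: G_cos x_def)
  then have ex: "\<exists>t2. 0 < t2 \<and> t2 < t1 \<and> \<not> invertible (Theta h t1 t2)" using bt bpos by blast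
  have un: "w1 = w2" if h1: "0 < w1 \<and> w1 < t1 \<and> \<not> invertible (Theta h t1 w1)"
    and h2: "0 < w2 \<and> w2 < t1 \<and> \<not> invertible (Theta h t1 w2)" for w1 w2 :: real
  proof -
    have c1: "0 < cos (pi*w1)" using root_props(1)[OF assms] h1 by blast
    have c2: "0 < cos (pi*w2)" using root_props(1)[OF assms] h2 by blast
    have z1: "g x (cos (pi*w1)) = 0" using sing_iff[OF assms(1), of w1 t1] h1 assms by (simp add: G_cos x_def)
    have z2: "g x (cos (pi*w2)) = 0" using sing_iff[OF assms(1), of w2 t1] h2 assms by (simp add: G_cos x_def)
    have "cos (pi*w1) = cos (pi*w2)"
    proof (rule ccontr)
      assume "cos (pi*w1) \<noteq> cos (pi*w2)"
      then consider "cos (pi*w1) < cos (pi*w2)" | "cos (pi*w2) < cos (pi*w1)" by linarith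
      then show False
      proof cases
        case 1 then show False using g_mono[OF x sq, of "cos (pi*w1)" "cos (pi*w2)"] c1 z1 z2 by simp
      next
        case 2 then show False using g_mono[OF x sq, of "cos (pi*w2)" "cos (pi*w1)"] c2 z1 z2 by simp
      qed
    qed
    moreover have "0 \<le> pi*w1" "pi*w1 \<le> pi" "0 \<le> pi*w2" "pi*w2 \<le> pi" using h1 h2 assms by auto
    ultimately have "pi*w1 = pi*w2" by (metis cos_inj_pi)
    then show ?thesis by simp
  qed
  show ?thesis using ex un by blast
qed


lemma part3: assumes "h > 0"
  shows "{(t1, t2). 1/2 < t1 \<and> t1 < 1 \<and> 0 < t2 \<and> t2 < t1 \<and> \<not> invertible (Theta h t1 t2)}
           = (\<lambda>t. ((t + fcurve t) / pi, (t - fcurve t) / pi)) ` {pi/4<..<3*pi/4}"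
proof
  show "{(t1, t2). 1/2 < t1 \<and> t1 < 1 \<and> 0 < t2 \<and> t2 < t1 \<and> \<not> invertible (Theta h t1 t2)}
       \<subseteq> (\<lambda>t. ((t + fcurve t) / pi, (t - fcurve t) / pi)) ` {pi/4<..<3*pi/4}"
  proof
    fix z assume "z \<in> {(t1, t2). 1/2 < t1 \<and> t1 < 1 \<and> 0 < t2 \<and> t2 < t1 \<and> \<not> invertible (Theta h t1 t2)}"
    then obtain t1 t2 where z: "z = (t1,t2)" and c: "1/2 < t1" "t1 < 1" "0 < t2" "t2 < t1"
      "\<not> invertible (Theta h t1 t2)" by blast
    have t2h: "t2 < 1/2" using root_props(2)[OF assms c] .
    define u where "u = pi*((t1+t2)/2)"
    define v where "v = pi*((t1-t2)/2)"
    have uv: "u+v = pi*t1" "u-v = pi*t2" unfolding u_def v_def by (simp_all add: field_simps)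
    have "pi*(1/4) < pi*((t1+t2)/2)" by (rule mult_strict_left_mono) (use c in auto)
    then have ur1: "pi/4 < u" unfolding u_def by simp
    have "pi*((t1+t2)/2) < pi*(3/4)" by (rule mult_strict_left_mono) (use c t2h in auto)
    then have ur2: "u < 3*pi/4" unfolding u_def by simp
    have "pi*((t1-t2)/2) < pi*(1/2)" by (rule mult_strict_left_mono) (use c in auto)
    then have vr2: "v < pi/2" unfolding v_def by simp
    have vr1: "0 < v" unfolding v_def using c by simp
    have su: "sin u \<noteq> 0" using ur1 ur2 pi_gt_zero sin_gt_zero[of u] by linarith
    have sv: "sin v \<noteq> 0" using vr1 vr2 pi_gt_zero sin_gt_zero[of v] by linarith
    have "G (pi*t1) (pi*t2) = 0" using sing_iff[OF assms c(3,4,2)] c(5) by simp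
    then have "G (u+v) (u-v) = 0" unfolding uv .
    then have E: "(cot u)^4 - (cot u)^2*(cot v)^2 + (cot v)^4 - 1 = 0"
      unfolding G_XY[OF su sv] using su sv by simp
    define X where "X = (cot u)^2"
    define Y where "Y = (cot v)^2"
    have c4: "(cot u)^4 = X^2" "(cot v)^4 = Y^2" unfolding X_def Y_def by (simp_all flip: power_mult)
    have E': "X^2 - X*Y + Y^2 = 1" using E c4 unfolding X_def[symmetric] Y_def[symmetric] by linarith
    have X1: "X < 1" unfolding X_def using ur1 ur2 by (rule cot_sq_lt1)
    have X0: "0 \<le> X" unfolding X_def by simp
    have qpos: "0 < cot v" using vr1 vr2 by (rule cot_gt_zero)
    have Y0: "0 < Y" unfolding Y_def using qpos by simp
    have YX: "X \<le> 2*Y"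
    proof (rule ccontr)
      assume "\<not> X \<le> 2*Y"
      then have "Y < X" using Y0 by linarith
      then have a1: "Y*Y < Y*X" using Y0 by (intro mult_strict_left_mono)
      have a2: "X*X \<le> X" using X0 X1 by (intro mult_left_le_one_le) auto
      have "X*X - X*Y + Y*Y = 1" using E' by (simp add: power2_eq_square)
      then show False using a1 a2 X1 by (simp add: mult.commute)
    qed
    have "(2*Y-X)^2 = 4*(X^2 - X*Y + Y^2) - 3*X^2" by (simp add: power2_eq_square algebra_simps)
    then have sqe: "(2*Y-X)^2 = 4 - 3*X^2" using E' by simp
    have sq: "sqrt (4 - 3*X^2) = 2*Y - X" by (rule real_sqrt_unique[OF sqe]) (use YX in simp)
    have inner: "(1/2) * ((cot u)^2 + sqrt (4 - 3 * (cot u)^4)) = Y"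
      unfolding X_def[symmetric] c4 sq by simp
    have sq2: "sqrt Y = cot v" by (rule real_sqrt_unique) (use qpos in \<open>simp_all add: Y_def\<close>)
    have "arctan (cot v) = pi/2 - v"
      unfolding tan_cot'[of v, symmetric] using vr1 vr2 by (intro arctan_tan) auto
    then have fu: "fcurve u = v" unfolding fcurve_def inner sq2 arccot_def by simp
    show "z \<in> (\<lambda>t. ((t + fcurve t) / pi, (t - fcurve t) / pi)) ` {pi/4<..<3*pi/4}"
    proof (rule image_eqI[of _ _ u])
      show "z = ((u + fcurve u) / pi, (u - fcurve u) / pi)" unfolding fu uv z by simp
      show "u \<in> {pi/4<..<3*pi/4}" using ur1 ur2 by simp
    qed
  qed
  show "(\<lambda>t. ((t + fcurve t) / pi, (t - fcurve t) / pi)) ` {pi/4<..<3*pi/4}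
      \<subseteq> {(t1, t2). 1/2 < t1 \<and> t1 < 1 \<and> 0 < t2 \<and> t2 < t1 \<and> \<not> invertible (Theta h t1 t2)}"
  proof
    fix z assume "z \<in> (\<lambda>t. ((t + fcurve t) / pi, (t - fcurve t) / pi)) ` {pi/4<..<3*pi/4}"
    then obtain t where z: "z = ((t + fcurve t) / pi, (t - fcurve t) / pi)" and t: "pi/4 < t" "t < 3*pi/4"
      by auto
    define X where "X = (cot t)^2"
    have X1: "X < 1" unfolding X_def using t by (rule cot_sq_lt1)
    have X0: "0 \<le> X" unfolding X_def by simp
    have XX: "X*X \<le> X" using X0 X1 by (intro mult_left_le_one_le) auto
    have c4: "(cot t)^4 = X^2" unfolding X_def by (simp flip: power_mult)
    define r where "r = sqrt (4 - 3*X^2)"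
    have r2: "r^2 = 4 - 3*X^2" unfolding r_def using XX X1 by (intro real_sqrt_pow2) (simp add: power2_eq_square)
    have r0: "0 \<le> r" unfolding r_def using XX X1 by (simp add: power2_eq_square)
    have "2 - X \<le> r" unfolding r_def by (rule real_le_rsqrt) (use XX in \<open>simp add: power2_eq_square algebra_simps\<close>)
    define Y where "Y = (1/2)*(X + r)"
    have Y1: "1 \<le> Y" unfolding Y_def using \<open>2 - X \<le> r\<close> by (simp add: field_simps)
    have "X^2 - X*Y + Y^2 = (3*X^2 + r^2)/4" unfolding Y_def by (simp add: power2_eq_square field_simps)
    then have EY: "X^2 - X*Y + Y^2 = 1" using r2 by simp
    define q where "q = sqrt Y"
    have q1: "1 \<le> q" unfolding q_def using Y1 by (rule real_sqrt_ge_one)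
    have q2: "q^2 = Y" unfolding q_def using Y1 by simp
    have inner: "(1/2) * ((cot t)^2 + sqrt (4 - 3 * (cot t)^4)) = Y"
      unfolding X_def[symmetric] c4 r_def[symmetric] Y_def ..
    define v where "v = fcurve t"
    have fv: "v = pi/2 - arctan q" unfolding v_def fcurve_def inner q_def[symmetric] arccot_def ..
    have "arctan 1 \<le> arctan q" using q1 arctan_le_iff by blast
    then have a1: "pi/4 \<le> arctan q" by (simp add: arctan_one)
    have a2: "arctan q < pi/2" by (rule arctan_ubound)
    have v1: "0 < v" "v \<le> pi/4" using fv a1 a2 by linarith+
    have cv: "cot v = q" using tan_cot'[of "pi/2 - arctan q"] unfolding fv by (simp add: tan_arctan)
    have st: "0 < sin t" using t pi_gt_zero by (intro sin_gt_zero) linarith+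
    have sv: "0 < sin v" using v1 pi_gt_zero by (intro sin_gt_zero) linarith+
    have "0 < (X - Y)^2" using X1 Y1 by simp
    moreover have "(X - Y)^2 = (X^2 - X*Y + Y^2) - X*Y" by (simp add: power2_eq_square algebra_simps)
    then have "(X - Y)^2 = 1 - X*Y" using EY by simp
    ultimately have XY: "X*Y < 1" by linarith
    have "(cot t * q)^2 = X*Y" unfolding X_def q2[symmetric] by (simp add: power_mult_distrib)
    then have pq: "cot t * q < 1"
    proof -
      assume e: "(cot t * q)^2 = X*Y"
      show "cot t * q < 1"
      proof (rule ccontr)
        assume "\<not> cot t * q < 1"
        then have "1 \<le> cot t * q" by simp
        then have "1 \<le> (cot t * q)^2" by (rule one_le_power)
        then show False using e XY by simp
      qed
    qed
    have m: "sin t * sin v * (cos t / sin t * (cos v / sin v)) = cos t * cos v"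
      using st sv by simp
    have "cos (t+v) = sin t * sin v * (cot t * cot v - 1)"
      unfolding cos_add cot_def right_diff_distrib m by simp
    also have "\<dots> < 0" using st sv pq unfolding cv by (intro mult_pos_neg mult_pos_pos) auto
    finally have cn: "cos (t+v) < 0" .
    have tv: "pi/2 < t+v" using t v1 cn pi_gt_zero by (intro cos_neg_gt) linarith+
    define t1 where "t1 = (t+v)/pi"
    define t2 where "t2 = (t-v)/pi"
    have pt: "pi*t1 = t+v" "pi*t2 = t-v" unfolding t1_def t2_def by simp_all
    have pip: "0 < pi" by (rule pi_gt_zero)
    have e1: "pi*(1/2) < t+v" using tv by simp
    have e2: "t+v < pi*1" using t v1 by simp
    have e3: "0 < t - v" using t v1 pip by linarith
    have "(pi*(1/2))/pi < (t+v)/pi" by (rule divide_strict_right_mono[OF e1 pip])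
    then have c1: "1/2 < t1" unfolding t1_def by simp
    have "(t+v)/pi < (pi*1)/pi" by (rule divide_strict_right_mono[OF e2 pip])
    then have c2: "t1 < 1" unfolding t1_def by simp
    have c3: "0 < t2" unfolding t2_def using e3 pip by (rule divide_pos_pos)
    have c4': "t2 < t1" unfolding t1_def t2_def using v1 pip by (intro divide_strict_right_mono) auto
    have q4: "q^4 = Y^2" unfolding q2[symmetric] by (simp flip: power_mult)
    have cv2: "(cot v)^2 = Y" "(cot v)^4 = Y^2" unfolding cv q2 q4 by simp_all
    have E0: "(cot t)^4 - (cot t)^2*(cot v)^2 + (cot v)^4 - 1 = 0"
      unfolding c4 X_def[symmetric] cv2 using EY by linarith
    have "G (t+v) (t-v) = 0"
      unfolding G_XY[OF st[THEN less_imp_neq, THEN not_sym] sv[THEN less_imp_neq, THEN not_sym]] E0 by simp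
    then have c5: "\<not> invertible (Theta h t1 t2)" using sing_iff[OF assms c3 c4' c2] pt by simp
    have zz: "z = (t1, t2)" unfolding z t1_def t2_def v_def ..
    show "z \<in> {(t1, t2). 1/2 < t1 \<and> t1 < 1 \<and> 0 < t2 \<and> t2 < t1 \<and> \<not> invertible (Theta h t1 t2)}"
      unfolding zz mem_Collect_eq case_prod_conv using c1 c2 c3 c4' c5 by blast
  qed
qed

theorem proposition5p2:
  fixes h :: real
  assumes "h > 0"
  shows "(\<forall>t1 t2. t1 < 1 \<and> t1 \<le> 1/2 \<and> 0 < t2 \<and> t2 < t1 \<longrightarrow> invertible (Theta h t1 t2))
       \<and> (\<forall>t1. 1/2 < t1 \<and> t1 < 1 \<longrightarrow>
            (\<exists>!t2. 0 < t2 \<and> t2 < t1 \<and> \<not> invertible (Theta h t1 t2))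
          \<and> (\<forall>t2. 0 < t2 \<and> t2 < t1 \<and> \<not> invertible (Theta h t1 t2) \<longrightarrow> t2 < 1/2))
       \<and> {(t1, t2). 1/2 < t1 \<and> t1 < 1 \<and> 0 < t2 \<and> t2 < t1 \<and> \<not> invertible (Theta h t1 t2)}
           = (\<lambda>t. ((t + fcurve t) / pi, (t - fcurve t) / pi)) ` {pi/4<..<3*pi/4}"
proof (intro conjI)
  show "\<forall>t1 t2. t1 < 1 \<and> t1 \<le> 1/2 \<and> 0 < t2 \<and> t2 < t1 \<longrightarrow> invertible (Theta h t1 t2)"
  proof (intro allI impI)
    fix t1 t2 :: real assume a: "t1 < 1 \<and> t1 \<le> 1/2 \<and> 0 < t2 \<and> t2 < t1"
    show "invertible (Theta h t1 t2)" using a by (intro part1[OF assms]) auto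
  qed
  show "\<forall>t1. 1/2 < t1 \<and> t1 < 1 \<longrightarrow>
            (\<exists>!t2. 0 < t2 \<and> t2 < t1 \<and> \<not> invertible (Theta h t1 t2))
          \<and> (\<forall>t2. 0 < t2 \<and> t2 < t1 \<and> \<not> invertible (Theta h t1 t2) \<longrightarrow> t2 < 1/2)"
  proof (intro allI impI conjI)
    fix t1 :: real assume a: "1/2 < t1 \<and> t1 < 1"
    show "\<exists>!t2. 0 < t2 \<and> t2 < t1 \<and> \<not> invertible (Theta h t1 t2)"
      using a by (intro part2[OF assms]) auto
    fix t2 :: real assume b: "0 < t2 \<and> t2 < t1 \<and> \<not> invertible (Theta h t1 t2)"
    show "t2 < 1/2" using a b by (intro root_props(2)[OF assms]) auto
  qed
  show "{(t1, t2). 1/2 < t1 \<and> t1 < 1 \<and> 0 < t2 \<and> t2 < t1 \<and> \<not> invertible (Theta h t1 t2)}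
           = (\<lambda>t. ((t + fcurve t) / pi, (t - fcurve t) / pi)) ` {pi/4<..<3*pi/4}"
    by (rule part3[OF assms])
qed

end
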